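(* Let $K$ be a compact Hausdorff space and $F$ a closed subset of $K$. If $K$ satisfies the countable chain condition and $F$ admits an extension operator in $K$, then $F$ satisfies the countable chain condition.
   Context: A topological space satisfies the countable chain condition (ccc) if every family of pairwise disjoint nonempty open subsets is countable. $C(K)$ is the Banach space of real-valued continuous functions on $K$ with the supremum norm. An extension operator for $F$ in $K$ is a bounded linear map $E:C(F)\to C(K)$ with $E(f)|_F=f$ for all $f\in C(F)$. *)

theory Defs
  imports "HOL-Analysis.Analysis"
begin

definition ccc_space :: "'a topology \<Rightarrow> bool" where
  "ccc_space X \<longleftrightarrow>
     (\<forall>\<U>. (\<forall>U\<in>\<U>. openin X U \<and> U \<noteq> {}) \<and> pairwise disjnt \<U> \<longrightarrow> countable \<U>)"

text \<open>C(S) for S a subset of topspace X: continuous real functions on S (subspace topology),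
  represented extensionally (value 0 outside S), so that elements correspond exactly to
  continuous functions on S.\<close>
definition Cspace :: "'a topology \<Rightarrow> 'a set \<Rightarrow> ('a \<Rightarrow> real) set" where
  "Cspace X S = {f. continuous_map (subtopology X S) euclideanreal f \<and> (\<forall>x. x \<notin> S \<longrightarrow> f x = 0)}"

definition extension_operator :: "'a topology \<Rightarrow> 'a set \<Rightarrow> (('a \<Rightarrow> real) \<Rightarrow> ('a \<Rightarrow> real)) \<Rightarrow> bool" where
  "extension_operator X F E \<longleftrightarrow>
     (\<forall>f\<in>Cspace X F. E f \<in> Cspace X (topspace X)) \<and>
     (\<forall>f\<in>Cspace X F. \<forall>g\<in>Cspace X F. E (\<lambda>x. f x + g x) = (\<lambda>x. E f x + E g x)) \<and>
     (\<forall>f\<in>Cspace X F. \<forall>c::real. E (\<lambda>x. c * f x) = (\<lambda>x. c * E f x)) \<and>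
     (\<exists>M. \<forall>f\<in>Cspace X F. \<forall>B. (\<forall>y\<in>F. \<bar>f y\<bar> \<le> B) \<longrightarrow> (\<forall>x\<in>topspace X. \<bar>E f x\<bar> \<le> M * B)) \<and>
     (\<forall>f\<in>Cspace X F. \<forall>y\<in>F. E f y = f y)"

end

theory Submission imports Defs begin

lemma ccc_bounded_order:
  assumes ccc: "ccc_space X"
  shows "\<And>I. (\<forall>i\<in>I. openin X (V i) \<and> V i \<noteq> {}) \<Longrightarrow>
     (\<forall>x. finite {i\<in>I. x \<in> V i} \<and> card {i\<in>I. x \<in> V i} \<le> n) \<Longrightarrow> countable I"
proof (induction n)
  case 0
  show ?case
  proof (cases "I = {}")
    case False
    then obtain i where i: "i \<in> I" by blast
    then obtain x where "x \<in> V i" using 0 by blast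
    with i 0(2)[rule_format, of x] show ?thesis by auto
  qed simp
next
  case (Suc n)
  define Ob where "Ob S = (\<Inter>i\<in>S. V i)" for S
  define SS where "SS = {S. S \<subseteq> I \<and> finite S \<and> card S = Suc n \<and> Ob S \<noteq> {}}"
  have inj: "inj_on Ob SS"
  proof (rule inj_onI)
    fix S T assume S: "S \<in> SS" and T: "T \<in> SS" and eq: "Ob S = Ob T"
    then obtain x where x: "x \<in> Ob S" "x \<in> Ob T" unfolding SS_def by auto
    have "S \<union> T \<subseteq> {i\<in>I. x \<in> V i}" using x S T unfolding Ob_def SS_def by auto
    hence "card (S \<union> T) \<le> Suc n"
      using Suc.prems(2) by (meson card_mono order_trans)
    moreover have "card S = Suc n" "finite T" "finite S" using S T unfolding SS_def by auto
    ultimately have "card (S \<union> T) = card S"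
      by (metis card_mono finite_UnI le_antisym sup_ge1)
    hence "T \<subseteq> S" using \<open>finite S\<close> \<open>finite T\<close>
      by (metis card_subset_eq finite_UnI sup_ge1 sup.orderE sup_ge2 sup_commute)
    moreover have "card T = Suc n" using T unfolding SS_def by auto
    ultimately show "S = T" using \<open>finite S\<close> \<open>card S = Suc n\<close> by (metis card_subset_eq)
  qed
  have "countable (Ob ` SS)"
  proof (rule ccc[unfolded ccc_space_def, rule_format], intro conjI ballI)
    fix U assume "U \<in> Ob ` SS"
    then obtain S where S: "S \<in> SS" "U = Ob S" by blast
    have "S \<noteq> {}" using S unfolding SS_def by auto
    then show "openin X U" using S Suc.prems(1) unfolding Ob_def SS_def
      by (simp add: openin_INT2 subset_iff)
    show "U \<noteq> {}" using S unfolding SS_def by auto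
  next
    show "pairwise disjnt (Ob ` SS)"
    proof (rule pairwiseI)
      fix A B assume A: "A \<in> Ob ` SS" and B: "B \<in> Ob ` SS" and ne: "A \<noteq> B"
      then obtain S T where S: "S \<in> SS" "A = Ob S" and T: "T \<in> SS" "B = Ob T" by blast
      have "S \<noteq> T" using ne S T by auto
      show "disjnt A B"
      proof (rule ccontr)
        assume "\<not> disjnt A B"
        then obtain x where x: "x \<in> Ob S" "x \<in> Ob T" using S T unfolding disjnt_def by auto
        have "S \<union> T \<subseteq> {i\<in>I. x \<in> V i}" using x S T unfolding Ob_def SS_def by auto
        hence "card (S \<union> T) \<le> Suc n"
          using Suc.prems(2) by (meson card_mono order_trans)
        moreover have "card S = Suc n" "finite T" "finite S" "card T = Suc n"
          using S T unfolding SS_def by auto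
        ultimately have "card (S \<union> T) = card S" "card (S \<union> T) = card T"
          by (metis card_mono finite_UnI le_antisym sup_ge1 sup_ge2)+
        hence "T \<subseteq> S" "S \<subseteq> T" using \<open>finite S\<close> \<open>finite T\<close>
          by (metis card_subset_eq finite_UnI sup_ge1 sup_ge2)+
        with \<open>S \<noteq> T\<close> show False by auto
      qed
    qed
  qed
  hence cSS: "countable SS" using inj by (metis countable_image_inj_on)
  define J where "J = \<Union>SS"
  have cJ: "countable J" unfolding J_def
    using cSS countable_UN[of SS "\<lambda>S. S"] by (simp add: SS_def countable_finite)
  have "countable (I - J)"
  proof (rule Suc.IH)
    show "\<forall>i\<in>I - J. openin X (V i) \<and> V i \<noteq> {}" using Suc.prems(1) by auto
    show "\<forall>x. finite {i \<in> I - J. x \<in> V i} \<and> card {i \<in> I - J. x \<in> V i} \<le> n"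
    proof
      fix x
      have sub: "{i \<in> I - J. x \<in> V i} \<subseteq> {i\<in>I. x \<in> V i}" by auto
      have fin: "finite {i \<in> I - J. x \<in> V i}" using Suc.prems(2) sub finite_subset by blast
      have le: "card {i \<in> I - J. x \<in> V i} \<le> Suc n"
        using Suc.prems(2) sub by (meson card_mono order_trans)
      have "card {i \<in> I - J. x \<in> V i} \<noteq> Suc n"
      proof
        assume c: "card {i \<in> I - J. x \<in> V i} = Suc n"
        hence "{i \<in> I - J. x \<in> V i} \<in> SS" using fin unfolding SS_def Ob_def
          by (auto simp: card_gt_0_iff)
        hence "{i \<in> I - J. x \<in> V i} \<subseteq> J" unfolding J_def by auto
        hence "{i \<in> I - J. x \<in> V i} = {}" by blast
        with c show False by (simp only: card.empty)
      qed
      with fin le show "finite {i \<in> I - J. x \<in> V i} \<and> card {i \<in> I - J. x \<in> V i} \<le> n" by simp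
    qed
  qed
  hence "countable ((I - J) \<union> J)" using cJ by (rule countable_Un)
  thus ?case by (rule countable_subset[rotated]) blast
qed


lemma Cspace_zero: "(\<lambda>x. 0) \<in> Cspace X S"
  by (simp add: Cspace_def)

lemma Cspace_add: "f \<in> Cspace X S \<Longrightarrow> g \<in> Cspace X S \<Longrightarrow> (\<lambda>x. f x + g x) \<in> Cspace X S"
  by (auto simp: Cspace_def intro: continuous_map_add)

lemma ext_zero: assumes "extension_operator X F E" shows "E (\<lambda>x. 0) = (\<lambda>x. 0)"
proof -
  have sc: "\<forall>f\<in>Cspace X F. \<forall>c::real. E (\<lambda>x. c * f x) = (\<lambda>x. c * E f x)"
    using assms unfolding extension_operator_def by blast
  have "E (\<lambda>x. 0 * (0::real)) = (\<lambda>x. 0 * E (\<lambda>x. 0) x)"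
    using sc[rule_format, OF Cspace_zero[of X F], of 0] .
  then show ?thesis by simp
qed

lemma ext_sum:
  assumes ext: "extension_operator X F E" and fin: "finite T"
  shows "(\<forall>U\<in>T. g U \<in> Cspace X F) \<longrightarrow>
     (\<lambda>z. \<Sum>U\<in>T. g U z) \<in> Cspace X F \<and> E (\<lambda>z. \<Sum>U\<in>T. g U z) = (\<lambda>z. \<Sum>U\<in>T. E (g U) z)"
  using fin
proof (induction T rule: finite_induct)
  case empty
  then show ?case using ext_zero[OF ext] Cspace_zero by simp
next
  case (insert a T)
  show ?case
  proof
    assume h: "\<forall>U\<in>insert a T. g U \<in> Cspace X F"
    then have IH: "(\<lambda>z. \<Sum>U\<in>T. g U z) \<in> Cspace X F" "E (\<lambda>z. \<Sum>U\<in>T. g U z) = (\<lambda>z. \<Sum>U\<in>T. E (g U) z)"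
      using insert by auto
    have ga: "g a \<in> Cspace X F" using h by auto
    have eq: "(\<lambda>z. \<Sum>U\<in>insert a T. g U z) = (\<lambda>z. g a z + (\<Sum>U\<in>T. g U z))"
      using insert by simp
    have "E (\<lambda>z. g a z + (\<Sum>U\<in>T. g U z)) = (\<lambda>z. E (g a) z + E (\<lambda>z. \<Sum>U\<in>T. g U z) z)"
    proof -
      have add: "\<forall>f\<in>Cspace X F. \<forall>g\<in>Cspace X F. E (\<lambda>x. f x + g x) = (\<lambda>x. E f x + E g x)"
        using ext unfolding extension_operator_def by blast
      show ?thesis using add[rule_format, OF ga IH(1)] by simp
    qed
    then show "(\<lambda>z. \<Sum>U\<in>insert a T. g U z) \<in> Cspace X F \<and>
        E (\<lambda>z. \<Sum>U\<in>insert a T. g U z) = (\<lambda>z. \<Sum>U\<in>insert a T. E (g U) z)"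
      using eq IH Cspace_add[OF ga IH(1)] insert by simp
  qed
qed

theorem proposition3p15:
  fixes X :: "'a topology" and F :: "'a set"
  assumes "compact_space X" and "Hausdorff_space X"
    and "closedin X F"
    and "ccc_space X"
    and "\<exists>E. extension_operator X F E"
  shows "ccc_space (subtopology X F)"
  unfolding ccc_space_def
proof (intro allI impI)
  fix \<U> assume H: "(\<forall>U\<in>\<U>. openin (subtopology X F) U \<and> U \<noteq> {}) \<and> pairwise disjnt \<U>"
  obtain E where ext: "extension_operator X F E" using assms(5) by blast
  have "\<exists>M. \<forall>f\<in>Cspace X F. \<forall>B. (\<forall>y\<in>F. \<bar>f y\<bar> \<le> B) \<longrightarrow> (\<forall>x\<in>topspace X. \<bar>E f x\<bar> \<le> M * B)"
    using ext unfolding extension_operator_def by blast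
  then obtain M where M0: "\<forall>f\<in>Cspace X F. \<forall>B. (\<forall>y\<in>F. \<bar>f y\<bar> \<le> B) \<longrightarrow> (\<forall>x\<in>topspace X. \<bar>E f x\<bar> \<le> M * B)"
    by blast
  have M: "\<And>f B x. f \<in> Cspace X F \<Longrightarrow> (\<forall>y\<in>F. \<bar>f y\<bar> \<le> B) \<Longrightarrow> x \<in> topspace X \<Longrightarrow> \<bar>E f x\<bar> \<le> M * B"
    using M0 by blast
  have Eext: "\<And>f y. f \<in> Cspace X F \<Longrightarrow> y \<in> F \<Longrightarrow> E f y = f y"
    using ext unfolding extension_operator_def by blast
  have EC: "\<And>f. f \<in> Cspace X F \<Longrightarrow> continuous_map X euclideanreal (E f)"
    using ext unfolding extension_operator_def Cspace_def by simp
  let ?Y = "subtopology X F"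
  have FX: "F \<subseteq> topspace X" using assms(3) closedin_subset by blast
  have topY: "topspace ?Y = F" using FX by (simp add: inf.absorb2)
  have normal: "normal_space ?Y"
  proof (rule compact_Hausdorff_or_regular_imp_normal_space)
    show "compact_space ?Y"
      by (rule compact_space_subtopology[OF closedin_compact_space[OF assms(1) assms(3)]])
    show "Hausdorff_space ?Y \<or> regular_space ?Y"
      using Hausdorff_space_subtopology[OF assms(2)] by blast
  qed
  have t1: "t1_space ?Y" using assms(2) Hausdorff_imp_t1_space t1_space_subtopology by blast
  have ex: "\<exists>f y. f \<in> Cspace X F \<and> y \<in> U \<and> f y = 1 \<and> (\<forall>x. 0 \<le> f x \<and> f x \<le> 1) \<and> (\<forall>x. x \<notin> U \<longrightarrow> f x = 0)"
    if U: "U \<in> \<U>" for U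
  proof -
    have oU: "openin ?Y U" and ne: "U \<noteq> {}" using H U by auto
    have UF: "U \<subseteq> F" using openin_subset[OF oU] topY by simp
    obtain y where y: "y \<in> U" using ne by blast
    have c1: "closedin ?Y (topspace ?Y - U)" using oU by blast
    have c2: "closedin ?Y {y}" using closedin_t1_singleton[OF t1] y UF topY by auto
    have dj: "disjnt (topspace ?Y - U) {y}" using y by (simp add: disjnt_def)
    obtain g where g: "continuous_map ?Y (top_of_set {0..1::real}) g"
      "g ` (topspace ?Y - U) \<subseteq> {0}" "g ` {y} \<subseteq> {1}"
      using Urysohn_lemma[OF normal c1 c2 dj, of 0 1] by auto
    define f where "f x = (if x \<in> U then g x else 0)" for x
    have gc: "continuous_map ?Y euclideanreal g"
      using g(1) continuous_map_in_subtopology by blast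
    have "continuous_map ?Y euclideanreal f"
      by (rule continuous_map_eq[OF gc]) (use g(2) in \<open>auto simp: f_def\<close>)
    moreover have "\<forall>x. x \<notin> F \<longrightarrow> f x = 0" using UF by (auto simp: f_def)
    ultimately have fC: "f \<in> Cspace X F" by (simp add: Cspace_def)
    have rng: "\<forall>x. 0 \<le> f x \<and> f x \<le> 1"
    proof
      fix x
      show "0 \<le> f x \<and> f x \<le> 1"
      proof (cases "x \<in> U")
        case True
        then have "x \<in> topspace ?Y" using UF topY by auto
        then have "g x \<in> {0..1}" using g(1) unfolding continuous_map_def by auto
        then show ?thesis using True by (simp add: f_def)
      qed (simp add: f_def)
    qed
    have "f y = 1" using g(3) y by (simp add: f_def)
    then show ?thesis using fC y rng by (intro exI[of _ f] exI[of _ y]) (auto simp: f_def)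
  qed
  define P where "P U g z \<longleftrightarrow> g \<in> Cspace X F \<and> z \<in> U \<and> g z = 1 \<and>
      (\<forall>x. 0 \<le> g x \<and> g x \<le> 1) \<and> (\<forall>x. x \<notin> U \<longrightarrow> g x = 0)" for U g z
  define f where "f U = (SOME g. \<exists>z. P U g z)" for U
  define y where "y U = (SOME z. P U (f U) z)" for U
  have fy: "f U \<in> Cspace X F \<and> y U \<in> U \<and> f U (y U) = 1 \<and>
      (\<forall>x. 0 \<le> f U x \<and> f U x \<le> 1) \<and> (\<forall>x. x \<notin> U \<longrightarrow> f U x = 0)" if U: "U \<in> \<U>" for U
  proof -
    have "\<exists>g z. P U g z" using ex[OF U] unfolding P_def by blast
    then have "\<exists>z. P U (f U) z" unfolding f_def by (rule someI_ex)
    then have "P U (f U) (y U)" unfolding y_def by (rule someI_ex)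
    then show ?thesis unfolding P_def by blast
  qed
  define V where "V U = {x \<in> topspace X. E (f U) x \<in> {1/2<..}}" for U
  have Vprop: "\<forall>U\<in>\<U>. openin X (V U) \<and> V U \<noteq> {}"
  proof
    fix U assume U: "U \<in> \<U>"
    have "openin X (V U)" unfolding V_def
      by (rule openin_continuous_map_preimage[OF EC]) (use fy[OF U] in auto)
    moreover have "y U \<in> V U"
    proof -
      have oU: "openin ?Y U" using H U by auto
      have "U \<subseteq> F" using openin_subset[OF oU] topY by simp
      then have "y U \<in> F" using fy[OF U] by auto
      then show ?thesis using fy[OF U] Eext FX by (auto simp: V_def)
    qed
    ultimately show "openin X (V U) \<and> V U \<noteq> {}" by blast
  qed
  have bound: "real (card T) \<le> 2 * M" if T: "finite T" "T \<subseteq> {U\<in>\<U>. x \<in> V U}" and Tne: "T \<noteq> {}" for T x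
  proof -
    have TC: "\<forall>U\<in>T. f U \<in> Cspace X F" using T fy by auto
    note s = ext_sum[OF ext T(1), of f, THEN mp, OF TC]
    have sb: "\<forall>z\<in>F. \<bar>\<Sum>U\<in>T. f U z\<bar> \<le> 1"
    proof
      fix z assume "z \<in> F"
      show "\<bar>\<Sum>U\<in>T. f U z\<bar> \<le> 1"
      proof (cases "\<exists>U0\<in>T. z \<in> U0")
        case True
        then obtain U0 where U0: "U0 \<in> T" "z \<in> U0" by blast
        have "\<forall>U\<in>T - {U0}. f U z = 0"
        proof
          fix U assume U: "U \<in> T - {U0}"
          have "disjnt U U0" using H U U0 T unfolding pairwise_def by blast
          then have "z \<notin> U" using U0 by (auto simp: disjnt_def)
          then show "f U z = 0" using fy U T by blast
        qed
        then have "(\<Sum>U\<in>T. f U z) = f U0 z"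
          using T(1) U0(1) by (simp add: sum.remove)
        moreover have "U0 \<in> \<U>" using U0 T by blast
        ultimately show ?thesis using fy[of U0] by simp
      next
        case False
        then have "\<forall>U\<in>T. f U z = 0" using fy T by blast
        then show ?thesis by simp
      qed
    qed
    show ?thesis
    proof (cases "T = {}")
      case True
      then show ?thesis using Tne by simp
    next
      case False
      then have x: "x \<in> topspace X" using T V_def by auto
      have "\<bar>E (\<lambda>z. \<Sum>U\<in>T. f U z) x\<bar> \<le> M * 1" using M[OF conjunct1[OF s] sb x] .
      moreover have "E (\<lambda>z. \<Sum>U\<in>T. f U z) x = (\<Sum>U\<in>T. E (f U) x)" using s by simp
      moreover have "(\<Sum>U\<in>T. (1/2::real)) \<le> (\<Sum>U\<in>T. E (f U) x)"
        using T by (intro sum_mono) (auto simp: V_def)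
      ultimately show ?thesis by simp
    qed
  qed
  have order: "\<forall>x. finite {U\<in>\<U>. x \<in> V U} \<and> card {U\<in>\<U>. x \<in> V U} \<le> nat \<lceil>2 * M\<rceil>"
  proof
    fix x
    have fin: "finite {U\<in>\<U>. x \<in> V U}"
    proof (rule ccontr)
      assume "infinite {U\<in>\<U>. x \<in> V U}"
      then obtain T where T: "finite T" "card T = Suc (nat \<lceil>2 * M\<rceil>)" "T \<subseteq> {U\<in>\<U>. x \<in> V U}"
        using infinite_arbitrarily_large by blast
      have "real (card T) \<le> 2 * M" using bound[OF T(1) T(3)] T(2) by fastforce
      with T(2) show False by linarith
    qed
    have "{U\<in>\<U>. x \<in> V U} = {} \<or> real (card {U\<in>\<U>. x \<in> V U}) \<le> 2 * M" using bound[OF fin order.refl] by blast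
    then have "card {U\<in>\<U>. x \<in> V U} \<le> nat \<lceil>2 * M\<rceil>"
    proof
      assume e: "{U\<in>\<U>. x \<in> V U} = {}" show ?thesis by (simp only: e card.empty le0)
    next
      assume a: "real (card {U\<in>\<U>. x \<in> V U}) \<le> 2 * M"
      have "2 * M \<le> real_of_int \<lceil>2 * M\<rceil>" by (rule le_of_int_ceiling)
      with a have "int (card {U\<in>\<U>. x \<in> V U}) \<le> \<lceil>2 * M\<rceil>" by linarith
      then show ?thesis by linarith
    qed
    with fin show "finite {U\<in>\<U>. x \<in> V U} \<and> card {U\<in>\<U>. x \<in> V U} \<le> nat \<lceil>2 * M\<rceil>" by blast
  qed
  show "countable \<U>" by (rule ccc_bounded_order[OF assms(4) Vprop order])
qed

end
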